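(* For every integer $n\ge 4$ there exist a boolean classifier $\kappa:\{0,1\}^n\to\{0,1\}$ and a point $\mathbf v\in\{0,1\}^n$ such that, for the sample $(\mathbf v,\kappa(\mathbf v))$, there is an irrelevant feature $i\in\mathcal F$ with $|\mathrm{Sv}(j)|<|\mathrm{Sv}(i)|$ for every $j\in\mathcal F\setminus\{i\}$ (issue I5; in particular $|\mathrm{Sv}(i)|=\max_{j\in\mathcal F}|\mathrm{Sv}(j)|$).
   Context: Let $\mathcal F=\{1,\dots,n\}$. A boolean classifier is a non-constant function $\kappa:\{0,1\}^n\to\{0,1\}$; a sample is a pair $(\mathbf v,c)$ with $\mathbf v\in\{0,1\}^n$ and $c=\kappa(\mathbf v)$. For $\mathcal S\subseteq\mathcal F$ let $\Upsilon(\mathcal S;\mathbf v)=\{\mathbf x\in\{0,1\}^n : x_j=v_j \text{ for all } j\in\mathcal S\}$ and, for any function $g$ on $\{0,1\}^n$, $\mathbf E[g\mid \mathbf x_{\mathcal S}=\mathbf v_{\mathcal S}]=|\Upsilon(\mathcal S;\mathbf v)|^{-1}\sum_{\mathbf x\in\Upsilon(\mathcal S;\mathbf v)}g(\mathbf x)$ (uniform distribution, independent features). The characteristic function is $\upsilon(\mathcal S)=\mathbf E[\kappa\mid\mathbf x_{\mathcal S}=\mathbf v_{\mathcal S}]$, and the SHAP score of feature $i$ is $\mathrm{Sv}(i)=\sum_{\mathcal S\subseteq\mathcal F\setminus\{i\}}\frac{|\mathcal S|!\,(n-|\mathcal S|-1)!}{n!}\big(\upsilon(\mathcal S\cup\{i\})-\upsilon(\mathcal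 S)\big)$. The similarity predicate is $\sigma(\mathbf x)=1$ if $\kappa(\mathbf x)=\kappa(\mathbf v)$ and $0$ otherwise. A set $\mathcal S\subseteq\mathcal F$ is a weak abductive explanation (WAXp) if $\mathbf E[\sigma\mid\mathbf x_{\mathcal S}=\mathbf v_{\mathcal S}]=1$ (i.e. $\kappa(\mathbf x)=\kappa(\mathbf v)$ for all $\mathbf x\in\Upsilon(\mathcal S;\mathbf v)$); an abductive explanation (AXp) is a WAXp $\mathcal S$ such that $\mathcal S\setminus\{t\}$ is not a WAXp for every $t\in\mathcal S$. A feature is relevant if it belongs to at least one AXp, and irrelevant otherwise. *)

theory Defs
  imports Complex_Main
begin

text \<open>Features are 1..n. A point of {0,1}^n is a function nat => bool that is
False outside {1..n} (x j = True encodes x_j = 1). A classifier is a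
function into bool (True encodes 1); only its values on the cube matter.\<close>

definition cube :: "nat \<Rightarrow> (nat \<Rightarrow> bool) set" where
  "cube n = {x. \<forall>j. j \<notin> {1..n} \<longrightarrow> \<not> x j}"

definition is_classifier :: "nat \<Rightarrow> ((nat \<Rightarrow> bool) \<Rightarrow> bool) \<Rightarrow> bool" where
  "is_classifier n \<kappa> \<longleftrightarrow> (\<exists>x\<in>cube n. \<exists>y\<in>cube n. \<kappa> x \<noteq> \<kappa> y)"

definition Ups :: "nat \<Rightarrow> nat set \<Rightarrow> (nat \<Rightarrow> bool) \<Rightarrow> (nat \<Rightarrow> bool) set" where
  "Ups n S v = {x \<in> cube n. \<forall>j\<in>S. x j = v j}"

definition cond_exp :: "nat \<Rightarrow> nat set \<Rightarrow> (nat \<Rightarrow> bool) \<Rightarrow> ((nat \<Rightarrow> bool) \<Rightarrow> real) \<Rightarrow> real" where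
  "cond_exp n S v g = (\<Sum>x\<in>Ups n S v. g x) / real (card (Ups n S v))"

definition charf :: "nat \<Rightarrow> ((nat \<Rightarrow> bool) \<Rightarrow> bool) \<Rightarrow> (nat \<Rightarrow> bool) \<Rightarrow> nat set \<Rightarrow> real" where
  "charf n \<kappa> v S = cond_exp n S v (\<lambda>x. of_bool (\<kappa> x))"

definition shap :: "nat \<Rightarrow> ((nat \<Rightarrow> bool) \<Rightarrow> bool) \<Rightarrow> (nat \<Rightarrow> bool) \<Rightarrow> nat \<Rightarrow> real" where
  "shap n \<kappa> v i = (\<Sum>S\<in>Pow ({1..n} - {i}).
      (fact (card S) * fact (n - card S - 1) / fact n) *
      (charf n \<kappa> v (S \<union> {i}) - charf n \<kappa> v S))"

definition sim :: "((nat \<Rightarrow> bool) \<Rightarrow> bool) \<Rightarrow> (nat \<Rightarrow> bool) \<Rightarrow> (nat \<Rightarrow> bool) \<Rightarrow> real" where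
  "sim \<kappa> v x = of_bool (\<kappa> x = \<kappa> v)"

definition waxp :: "nat \<Rightarrow> ((nat \<Rightarrow> bool) \<Rightarrow> bool) \<Rightarrow> (nat \<Rightarrow> bool) \<Rightarrow> nat set \<Rightarrow> bool" where
  "waxp n \<kappa> v S \<longleftrightarrow> S \<subseteq> {1..n} \<and> cond_exp n S v (sim \<kappa> v) = 1"

definition axp :: "nat \<Rightarrow> ((nat \<Rightarrow> bool) \<Rightarrow> bool) \<Rightarrow> (nat \<Rightarrow> bool) \<Rightarrow> nat set \<Rightarrow> bool" where
  "axp n \<kappa> v S \<longleftrightarrow> waxp n \<kappa> v S \<and> (\<forall>t\<in>S. \<not> waxp n \<kappa> v (S - {t}))"

definition relevant :: "nat \<Rightarrow> ((nat \<Rightarrow> bool) \<Rightarrow> bool) \<Rightarrow> (nat \<Rightarrow> bool) \<Rightarrow> nat \<Rightarrow> bool" where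
  "relevant n \<kappa> v i \<longleftrightarrow> (\<exists>S. axp n \<kappa> v S \<and> i \<in> S)"

end

theory Submission
  imports Defs
begin



lemma cube_eq: "cube n = (\<lambda>T j. j \<in> T) ` Pow {1..n}"
proof
  show "cube n \<subseteq> (\<lambda>T j. j \<in> T) ` Pow {1..n}"
  proof
    fix x assume x: "x \<in> cube n"
    have "x = (\<lambda>j. j \<in> {j. x j})" by auto
    moreover have "{j. x j} \<subseteq> {1..n}" using x unfolding cube_def by blast
    ultimately show "x \<in> (\<lambda>T j. j \<in> T) ` Pow {1..n}" by blast
  qed
qed (auto simp: cube_def)

lemma finite_cube: "finite (cube n)"
  by (simp add: cube_eq)

lemma finite_Ups: "finite (Ups n S a)"
  unfolding Ups_def using finite_cube by simp

lemma flip_cube: "j \<in> {1..n} \<Longrightarrow> x \<in> cube n \<Longrightarrow> x(j := \<not> x j) \<in> cube n"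
  unfolding cube_def by auto

lemma Ups_flip_bij:
  assumes j: "j \<in> {1..n}" "j \<notin> S"
  shows "bij_betw (\<lambda>x. x(j := \<not> x j)) (Ups n (insert j S) (a(j:=True))) (Ups n (insert j S) (a(j:=False)))"
proof (rule bij_betw_byWitness[where f'="\<lambda>x. x(j := \<not> x j)"])
  show "\<forall>x\<in>Ups n (insert j S) (a(j := True)). (x(j := \<not> x j))(j := \<not> (x(j := \<not> x j)) j) = x" by auto
  show "\<forall>x\<in>Ups n (insert j S) (a(j := False)). (x(j := \<not> x j))(j := \<not> (x(j := \<not> x j)) j) = x" by auto
  show "(\<lambda>x. x(j := \<not> x j)) ` Ups n (insert j S) (a(j := True)) \<subseteq> Ups n (insert j S) (a(j := False))"
    using j unfolding Ups_def cube_def by auto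
  show "(\<lambda>x. x(j := \<not> x j)) ` Ups n (insert j S) (a(j := False)) \<subseteq> Ups n (insert j S) (a(j := True))"
    using j unfolding Ups_def cube_def by auto
qed

lemma split_lemma:
  assumes j: "j \<in> {1..n}" "j \<notin> S"
  shows "cond_exp n S a g = (cond_exp n (insert j S) (a(j:=True)) g + cond_exp n (insert j S) (a(j:=False)) g) / 2"
proof -
  define U1 where "U1 = Ups n (insert j S) (a(j:=True))"
  define U0 where "U0 = Ups n (insert j S) (a(j:=False))"
  have U: "Ups n S a = U1 \<union> U0" using j unfolding U1_def U0_def Ups_def by auto
  have D: "U1 \<inter> U0 = {}" unfolding U1_def U0_def Ups_def by auto
  have f: "finite U1" "finite U0" unfolding U1_def U0_def by (auto simp: finite_Ups)
  have c: "card U1 = card U0" using bij_betw_same_card[OF Ups_flip_bij[OF j]] unfolding U1_def U0_def .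
  have s: "sum g (Ups n S a) = sum g U1 + sum g U0" using U D f by (simp add: sum.union_disjoint)
  have cu: "card (Ups n S a) = card U1 + card U0" using U D f by (simp add: card_Un_disjoint)
  show ?thesis
  proof (cases "card U1 = 0")
    case True
    then have "U1 = {}" "U0 = {}" using f c by auto
    then show ?thesis using U unfolding cond_exp_def U1_def[symmetric] U0_def[symmetric] by simp
  next
    case False
    then show ?thesis unfolding cond_exp_def U1_def[symmetric] U0_def[symmetric] s cu c
      by (simp add: field_simps)
  qed
qed

lemma dummy_lemma:
  assumes j: "j \<in> {1..n}" "j \<notin> S" and inv: "\<And>x. x \<in> cube n \<Longrightarrow> g (x(j := \<not> x j)) = g x"
    and aj: "a j"
  shows "cond_exp n (insert j S) a g = cond_exp n S a g"
proof -
  define U1 where "U1 = Ups n (insert j S) (a(j:=True))"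
  define U0 where "U0 = Ups n (insert j S) (a(j:=False))"
  have b: "bij_betw (\<lambda>x. x(j := \<not> x j)) U1 U0" using Ups_flip_bij[OF j] unfolding U1_def U0_def .
  have c: "card U1 = card U0" using bij_betw_same_card[OF b] .
  have "sum g U0 = sum (g \<circ> (\<lambda>x. x(j := \<not> x j))) U1" using sum.reindex_bij_betw[OF b, of g] by simp
  also have "\<dots> = sum g U1"
  proof (rule sum.cong)
    fix x assume "x \<in> U1"
    then have "x \<in> cube n" "x j" unfolding U1_def Ups_def by auto
    then show "(g \<circ> (\<lambda>x. x(j := \<not> x j))) x = g x" using inv[of x] by simp
  qed simp
  finally have s: "sum g U0 = sum g U1" .
  have e: "cond_exp n (insert j S) (a(j:=True)) g = cond_exp n (insert j S) (a(j:=False)) g"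
    unfolding cond_exp_def U1_def[symmetric] U0_def[symmetric] s c ..
  have aa: "a(j:=True) = a" using aj by (auto simp: fun_eq_iff)
  show ?thesis using split_lemma[OF j, of a g] e aa by simp
qed

lemma dummy_set:
  assumes "finite D" "D \<subseteq> {1..n}" "\<forall>d\<in>D. a d"
    and inv: "\<And>d x. d \<in> D \<Longrightarrow> x \<in> cube n \<Longrightarrow> g (x(d := \<not> x d)) = g x"
  shows "cond_exp n (S \<union> D) a g = cond_exp n S a g"
  using assms
proof (induction D rule: finite_induct)
  case empty then show ?case by simp
next
  case (insert d D)
  show ?case
  proof (cases "d \<in> S \<union> D")
    case True
    then have "S \<union> insert d D = S \<union> D" by auto
    then show ?thesis using insert by simp
  next
    case False
    have "cond_exp n (S \<union> insert d D) a g = cond_exp n (insert d (S \<union> D)) a g" by simp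
    also have "\<dots> = cond_exp n (S \<union> D) a g"
    proof (rule dummy_lemma)
      show "\<And>x. x \<in> cube n \<Longrightarrow> g (x(d := \<not> x d)) = g x" using insert.prems(3) by blast
    qed (use insert False in auto)
    also have "\<dots> = cond_exp n S a g" using insert by auto
    finally show ?thesis .
  qed
qed

lemma reduce:
  assumes "T \<subseteq> {1..n}" "\<forall>d\<in>{1..n}. a d"
    and inv: "\<And>d x. d \<in> {1..n} - K \<Longrightarrow> x \<in> cube n \<Longrightarrow> g (x(d := \<not> x d)) = g x"
  shows "cond_exp n T a g = cond_exp n (T \<inter> K) a g"
proof -
  have "T = (T \<inter> K) \<union> (T - K)" by auto
  then have "cond_exp n T a g = cond_exp n ((T \<inter> K) \<union> (T - K)) a g" by simp
  also have "\<dots> = cond_exp n (T \<inter> K) a g"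
    by (rule dummy_set) (use assms in \<open>auto intro: finite_subset\<close>)
  finally show ?thesis .
qed

lemma leaf:
  assumes "A \<subseteq> {1..n}" "\<And>x. (\<forall>j\<in>A. x j = a j) \<Longrightarrow> g x = c"
  shows "cond_exp n A a g = c"
proof -
  define y where "y = (\<lambda>j. if j \<in> {1..n} then a j else False)"
  have "y \<in> Ups n A a" using assms(1) unfolding y_def Ups_def cube_def by auto
  then have ne: "card (Ups n A a) > 0" using finite_Ups card_gt_0_iff by blast
  have "sum g (Ups n A a) = sum (\<lambda>_. c) (Ups n A a)"
    by (rule sum.cong) (auto simp: Ups_def assms(2))
  then show ?thesis using ne unfolding cond_exp_def by simp
qed




definition w :: "nat \<Rightarrow> nat \<Rightarrow> real" where
  "w t a = fact a * fact (t - a - 1) / fact t"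

lemma w_step:
  assumes "s \<le> c"
  shows "w (c+2) s + w (c+2) (s+1) = w (c+1) s"
proof -
  obtain r where c: "c = s + r" using assms le_Suc_ex by blast
  have e1: "c + 2 - s - 1 = r + 1" "c + 2 - (s+1) - 1 = r" "c + 1 - s - 1 = r" using c by auto
  have f: "fact (c+2) = (of_nat (s+r+2) :: real) * fact (s+r+1)"
    using fact_Suc[of "s+r+1"] c by (simp add: algebra_simps)
  have f1: "fact (r+1) = (of_nat (r+1) :: real) * fact r" using fact_Suc[of r] by simp
  have f2: "fact (s+1) = (of_nat (s+1) :: real) * fact s" using fact_Suc[of s] by simp
  have pos: "fact (s+r+1) > (0::real)" by simp
  define F where "F = (fact (s+r+1) :: real)"
  have "w (c+2) s + w (c+2) (s+1) = (fact s * (of_nat (r+1) * fact r)) / (of_nat (s+r+2) * F)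
      + ((of_nat (s+1) * fact s) * fact r) / (of_nat (s+r+2) * F)"
    unfolding w_def e1 f f1 f2 F_def by simp
  also have "\<dots> = (fact s * (of_nat (r+1) * fact r) + (of_nat (s+1) * fact s) * fact r) / (of_nat (s+r+2) * F)"
    by (rule add_divide_distrib[symmetric])
  also have "\<dots> = (fact s * fact r * of_nat (s+r+2)) / (of_nat (s+r+2) * F)"
    by (simp add: algebra_simps)
  also have "\<dots> = fact s * fact r / F" by simp
  also have "\<dots> = fact s * fact r / fact (s+r+1)" unfolding F_def ..
  also have "\<dots> = w (c+1) s" unfolding w_def e1 using c by simp
  finally show ?thesis .
qed

lemma sum_Pow_insert:
  assumes "finite M" "d \<notin> M"
  shows "(\<Sum>S\<in>Pow (insert d M). f S) = (\<Sum>S\<in>Pow M. f S + f (insert d S))"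
proof -
  have inj: "inj_on (insert d) (Pow M)" using assms(2) unfolding inj_on_def by (metis Diff_insert_absorb PowD in_mono)
  have dis: "Pow M \<inter> insert d ` Pow M = {}" using assms(2) by auto
  have "(\<Sum>S\<in>Pow (insert d M). f S) = (\<Sum>S\<in>Pow M. f S) + (\<Sum>S\<in>insert d ` Pow M. f S)"
    unfolding Pow_insert using assms dis by (simp add: sum.union_disjoint)
  also have "(\<Sum>S\<in>insert d ` Pow M. f S) = (\<Sum>S\<in>Pow M. f (insert d S))"
    using sum.reindex[OF inj] by simp
  finally show ?thesis by (simp add: sum.distrib)
qed

lemma Phi:
  assumes "finite D" "finite K" "D \<inter> K = {}"
  shows "(\<Sum>S\<in>Pow (K \<union> D). w (card (K \<union> D) + 1) (card S) * h (S \<inter> K))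
       = (\<Sum>S\<in>Pow K. w (card K + 1) (card S) * h S)"
  using assms
proof (induction D rule: finite_induct)
  case empty
  show ?case by (rule sum.cong) (auto simp: Int_absorb2)
next
  case (insert d D)
  have dn: "d \<notin> K \<union> D" using insert by auto
  have fin: "finite (K \<union> D)" using insert by auto
  have eq: "K \<union> insert d D = insert d (K \<union> D)" by auto
  have cd: "card (insert d (K \<union> D)) = card (K \<union> D) + 1" using dn fin by simp
  have "(\<Sum>S\<in>Pow (K \<union> insert d D). w (card (K \<union> insert d D) + 1) (card S) * h (S \<inter> K))
     = (\<Sum>S\<in>Pow (K \<union> D). w (card (K \<union> D) + 2) (card S) * h (S \<inter> K)
          + w (card (K \<union> D) + 2) (card (insert d S)) * h (insert d S \<inter> K))"
    unfolding eq cd using sum_Pow_insert[OF fin dn] by (simp add: add.assoc)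
  also have "\<dots> = (\<Sum>S\<in>Pow (K \<union> D). w (card (K \<union> D) + 1) (card S) * h (S \<inter> K))"
  proof (rule sum.cong)
    fix S assume S: "S \<in> Pow (K \<union> D)"
    then have fS: "finite S" using fin finite_subset by auto
    have dS: "d \<notin> S" using S dn by auto
    have le: "card S \<le> card (K \<union> D)" by (rule card_mono) (use fin S in auto)
    have "insert d S \<inter> K = S \<inter> K" using insert by auto
    moreover have "card (insert d S) = card S + 1" using fS dS by simp
    ultimately show "w (card (K \<union> D) + 2) (card S) * h (S \<inter> K) +
          w (card (K \<union> D) + 2) (card (insert d S)) * h (insert d S \<inter> K) =
          w (card (K \<union> D) + 1) (card S) * h (S \<inter> K)"
      using w_step[OF le] by (simp add: distrib_right[symmetric])
  qed simp
  also have "\<dots> = (\<Sum>S\<in>Pow K. w (card K + 1) (card S) * h S)" using insert by auto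
  finally show ?case .
qed

definition kap :: "(nat \<Rightarrow> bool) \<Rightarrow> bool" where
  "kap x = (x 4 \<and> ((x 1 \<and> x 2 \<and> \<not> x 3) \<or> (x 1 \<and> \<not> x 2 \<and> x 3) \<or> (\<not> x 1 \<and> x 2 \<and> x 3)))"

definition vv :: "nat \<Rightarrow> nat \<Rightarrow> bool" where "vv n = (\<lambda>j. j \<in> {1..n})"

lemma kap_flip: "d \<notin> {1,2,3,4} \<Longrightarrow> kap (x(d := b)) = kap x"
  unfolding kap_def by auto

lemma charf_reduce:
  assumes "T \<subseteq> {1..n}"
  shows "charf n kap (vv n) T = charf n kap (vv n) (T \<inter> {1,2,3,4})"
  unfolding charf_def
  by (rule reduce) (use assms in \<open>auto simp: vv_def kap_flip\<close>)

lemma leaf_kap: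
  assumes "{1,2,3,4} \<subseteq> A" "A \<subseteq> {1..n}"
  shows "cond_exp n A a (\<lambda>x. of_bool (kap x)) = of_bool (kap a)"
  by (rule leaf) (use assms in \<open>auto simp: kap_def\<close>)

lemmas spl = split_lemma[of 1] split_lemma[of 2] split_lemma[of 3] split_lemma[of 4]

lemma w4: "w 4 0 = 1/4" "w 4 1 = 1/12" "w 4 2 = 1/12" "w 4 3 = 1/4"
  by (simp_all add: w_def fact_numeral)



lemma leaf_kap2:
  assumes "{Suc 0,2,3,4} \<subseteq> A" "A \<subseteq> {1..n}"
  shows "cond_exp n A a (\<lambda>x. of_bool (x 4 \<and> ((x (Suc 0) \<and> x 2 \<and> \<not> x 3) \<or> (x (Suc 0) \<and> \<not> x 2 \<and> x 3) \<or> (\<not> x (Suc 0) \<and> x 2 \<and> x 3)))) = of_bool (kap a)"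
  using leaf_kap[OF _ assms(2)] assms(1) unfolding kap_def by simp

lemma vv_cube: "vv n \<in> cube n" unfolding vv_def cube_def by auto

lemma shap_K:
  assumes n: "n \<ge> 4" and j: "j \<in> {1,2,3,4}"
  shows "shap n kap (vv n) j = (\<Sum>S\<in>Pow ({1,2,3,4}-{j}). w 4 (card S) *
            (charf n kap (vv n) (S \<union> {j}) - charf n kap (vv n) S))"
proof -
  define K0 where "K0 = ({1,2,3,4}::nat set) - {j}"
  define D where "D = ({1..n} - {j}) - K0"
  define h where "h B = charf n kap (vv n) (B \<union> {j}) - charf n kap (vv n) B" for B
  have jn: "j \<in> {1..n}" using n j by auto
  have N: "{1..n} - {j} = K0 \<union> D" unfolding D_def K0_def using n by auto
  have fD: "finite D" "finite K0" "D \<inter> K0 = {}" unfolding D_def K0_def by auto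
  have cN: "card (K0 \<union> D) + 1 = n" unfolding N[symmetric] using jn by simp
  have cK: "card K0 + 1 = 4" unfolding K0_def using j by auto
  have "shap n kap (vv n) j = (\<Sum>S\<in>Pow (K0 \<union> D). w (card (K0 \<union> D) + 1) (card S) * h (S \<inter> K0))"
    unfolding shap_def N cN
  proof (rule sum.cong)
    fix S assume S: "S \<in> Pow (K0 \<union> D)"
    then have Sn: "S \<subseteq> {1..n}" "j \<notin> S" using N by auto
    have "charf n kap (vv n) (S \<union> {j}) = charf n kap (vv n) ((S \<union> {j}) \<inter> {1,2,3,4})"
      by (rule charf_reduce) (use Sn jn in auto)
    also have "(S \<union> {j}) \<inter> {1,2,3,4} = (S \<inter> K0 \<union> {j}) \<inter> {1,2,3,4}" unfolding K0_def using j by auto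
    also have "charf n kap (vv n) \<dots> = charf n kap (vv n) (S \<inter> K0 \<union> {j})"
      by (rule charf_reduce[symmetric]) (use Sn jn K0_def in auto)
    finally have e1: "charf n kap (vv n) (S \<union> {j}) = charf n kap (vv n) (S \<inter> K0 \<union> {j})" .
    have "charf n kap (vv n) S = charf n kap (vv n) (S \<inter> {1,2,3,4})"
      by (rule charf_reduce) (use Sn in auto)
    also have "S \<inter> {1,2,3,4} = (S \<inter> K0) \<inter> {1,2,3,4}" unfolding K0_def using Sn by auto
    also have "charf n kap (vv n) \<dots> = charf n kap (vv n) (S \<inter> K0)"
      by (rule charf_reduce[symmetric]) (use Sn in auto)
    finally have e2: "charf n kap (vv n) S = charf n kap (vv n) (S \<inter> K0)" .
    show "fact (card S) * fact (n - card S - 1) / fact n *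
         (charf n kap (vv n) (S \<union> {j}) - charf n kap (vv n) S) =
         w n (card S) * h (S \<inter> K0)"
      unfolding h_def w_def e1 e2 ..
  qed simp
  also have "\<dots> = (\<Sum>S\<in>Pow K0. w (card K0 + 1) (card S) * h S)"
    by (rule Phi[OF fD])
  finally have "shap n kap (vv n) j = (\<Sum>S\<in>Pow K0. w 4 (card S) * h S)" unfolding cK .
  then show ?thesis unfolding h_def K0_def .
qed

lemma shap_dummy:
  assumes j: "j \<in> {1..n}" "j \<notin> {1,2,3,4}"
  shows "shap n kap (vv n) j = 0"
  unfolding shap_def
proof (rule sum.neutral, rule ballI)
  fix S assume S: "S \<in> Pow ({1..n} - {j})"
  have "charf n kap (vv n) (insert j S) = charf n kap (vv n) S"
    unfolding charf_def
    by (rule dummy_lemma) (use j S in \<open>auto simp: kap_flip vv_def\<close>)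
  then show "fact (card S) * fact (n - card S - 1) / fact n *
         (charf n kap (vv n) (S \<union> {j}) - charf n kap (vv n) S) = 0" by simp
qed




definition avg :: "bool \<Rightarrow> (bool \<Rightarrow> real) \<Rightarrow> real" where
  "avg b f = (if b then f True else (f True + f False) / 2)"

definition cf :: "bool \<Rightarrow> bool \<Rightarrow> bool \<Rightarrow> bool \<Rightarrow> real" where
  "cf b1 b2 b3 b4 = avg b1 (\<lambda>c1. avg b2 (\<lambda>c2. avg b3 (\<lambda>c3. avg b4 (\<lambda>c4.
     of_bool (c4 \<and> ((c1 \<and> c2 \<and> \<not> c3) \<or> (c1 \<and> \<not> c2 \<and> c3) \<or> (\<not> c1 \<and> c2 \<and> c3)))))))"

lemma charf_cases:
  assumes n: "n \<ge> 4"
  shows "charf n kap (vv n) ((if b1 then {1} else {}) \<union> (if b2 then {2} else {}) \<union>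
           (if b3 then {3} else {}) \<union> (if b4 then {4} else {})) = cf b1 b2 b3 b4"
  using n
  by (cases b1; cases b2; cases b3; cases b4;
      simp add: charf_def split_lemma[of "Suc 0"] split_lemma[of 2] split_lemma[of 3] split_lemma[of 4];
      simp add: leaf_kap2 kap_def vv_def cf_def avg_def)

lemma charf_K:
  assumes n: "n \<ge> 4" and B: "B \<subseteq> {1,2,3,4}"
  shows "charf n kap (vv n) B = cf (1 \<in> B) (2 \<in> B) (3 \<in> B) (4 \<in> B)"
proof -
  have "B = (if 1 \<in> B then {1} else {}) \<union> (if 2 \<in> B then {2} else {}) \<union>
           (if 3 \<in> B then {3} else {}) \<union> (if 4 \<in> B then {4} else {})"
    using B by auto
  then show ?thesis using charf_cases[OF n] by metis
qed




lemma w4': "w 4 0 = 1/4" "w 4 (Suc 0) = 1/12" "w 4 (Suc (Suc 0)) = 1/12" "w 4 (Suc (Suc (Suc 0))) = 1/4"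
  by (simp_all add: w_def fact_numeral)

lemma shap4:
  assumes n: "n \<ge> 4"
  shows "shap n kap (vv n) 4 = 11/64"
  using n
  apply (simp add: shap_K sum_Pow_insert w4' insert_Diff_if)
  apply (simp add: charf_K)
  apply (simp add: cf_def avg_def)
  done
lemma shap1:
  assumes n: "n \<ge> 4"
  shows "shap n kap (vv n) 1 = -23/192"
  using n
  apply (simp add: shap_K sum_Pow_insert w4' insert_Diff_if)
  apply (simp add: charf_K)
  apply (simp add: cf_def avg_def)
  done
lemma shap2:
  assumes n: "n \<ge> 4"
  shows "shap n kap (vv n) 2 = -23/192"
  using n
  apply (simp add: shap_K sum_Pow_insert w4' insert_Diff_if)
  apply (simp add: charf_K)
  apply (simp add: cf_def avg_def)
  done
lemma shap3:
  assumes n: "n \<ge> 4"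
  shows "shap n kap (vv n) 3 = -23/192"
  using n
  apply (simp add: shap_K sum_Pow_insert w4' insert_Diff_if)
  apply (simp add: charf_K)
  apply (simp add: cf_def avg_def)
  done



lemma cond_sim_one:
  assumes "cond_exp n S a (sim \<kappa> a) = 1"
  shows "\<forall>x\<in>Ups n S a. \<kappa> x = \<kappa> a"
proof (rule ccontr)
  assume "\<not> ?thesis"
  then obtain x where x: "x \<in> Ups n S a" "\<kappa> x \<noteq> \<kappa> a" by blast
  define U where "U = Ups n S a"
  have f: "finite U" unfolding U_def by (rule finite_Ups)
  have xU: "x \<in> U" using x(1) unfolding U_def .
  have cpos: "card U > 0" using f xU card_gt_0_iff by blast
  have "sum (sim \<kappa> a) U = sum (sim \<kappa> a) (U - {x}) + sim \<kappa> a x"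
    using sum.remove[OF f xU, of "sim \<kappa> a"] by linarith
  also have "sim \<kappa> a x = 0" using x by (simp add: sim_def)
  also have "sum (sim \<kappa> a) (U - {x}) \<le> of_nat (card (U - {x})) * 1"
    by (rule sum_bounded_above) (simp add: sim_def)
  also have "card (U - {x}) = card U - 1" using xU f by simp
  finally have "sum (sim \<kappa> a) U \<le> real (card U - 1)" by simp
  then have "sum (sim \<kappa> a) U < real (card U)" using cpos by linarith
  then have "cond_exp n S a (sim \<kappa> a) < 1" unfolding cond_exp_def U_def[symmetric] using cpos
    by (simp add: divide_less_eq)
  then show False using assms by simp
qed

lemma cond_sim_one':
  assumes "a \<in> cube n" "\<forall>x\<in>Ups n S a. \<kappa> x = \<kappa> a"
  shows "cond_exp n S a (sim \<kappa> a) = 1"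
proof -
  have "a \<in> Ups n S a" using assms unfolding Ups_def by auto
  then have cpos: "card (Ups n S a) > 0" using finite_Ups card_gt_0_iff by blast
  have "sum (sim \<kappa> a) (Ups n S a) = sum (\<lambda>_. 1) (Ups n S a)"
    by (rule sum.cong) (use assms in \<open>auto simp: sim_def\<close>)
  then show ?thesis using cpos unfolding cond_exp_def by simp
qed

lemma irrelevant4: "\<not> relevant n kap (vv n) 4"
proof
  assume "relevant n kap (vv n) 4"
  then obtain S where S: "axp n kap (vv n) S" "4 \<in> S" unfolding relevant_def by blast
  then have w: "waxp n kap (vv n) S" and nw: "\<not> waxp n kap (vv n) (S - {4})" unfolding axp_def by auto
  have all: "\<forall>x\<in>Ups n S (vv n). kap x = kap (vv n)" using w cond_sim_one unfolding waxp_def by blast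
  have "\<forall>x\<in>Ups n (S - {4}) (vv n). kap x = kap (vv n)"
  proof
    fix x assume x: "x \<in> Ups n (S - {4}) (vv n)"
    show "kap x = kap (vv n)"
    proof (cases "x 4")
      case True
      then have "x \<in> Ups n S (vv n)" using x S(2) w unfolding Ups_def waxp_def vv_def by auto
      then show ?thesis using all by blast
    next
      case False then show ?thesis by (simp add: kap_def vv_def)
    qed
  qed
  then have "waxp n kap (vv n) (S - {4})" using w cond_sim_one'[OF vv_cube] unfolding waxp_def by auto
  then show False using nw by simp
qed

theorem proposition4:
  fixes n :: nat
  assumes "n \<ge> 4"
  shows "\<exists>\<kappa> v. is_classifier n \<kappa> \<and> v \<in> cube n \<and>
           (\<exists>i\<in>{1..n}. \<not> relevant n \<kappa> v i \<and>
              (\<forall>j\<in>{1..n} - {i}. \<bar>shap n \<kappa> v j\<bar> < \<bar>shap n \<kappa> v i\<bar>))"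
proof (intro exI conjI bexI)
  have y: "(vv n)(3 := False) \<in> cube n" using vv_cube[of n] unfolding cube_def by auto
  show "is_classifier n kap"
    unfolding is_classifier_def
    by (rule bexI[OF _ vv_cube], rule bexI[OF _ y]) (use assms in \<open>simp add: kap_def vv_def\<close>)
  show "vv n \<in> cube n" by (rule vv_cube)
  show "4 \<in> {1..n}" using assms by simp
  show "\<not> relevant n kap (vv n) 4" by (rule irrelevant4)
  show "\<forall>j\<in>{1..n} - {4}. \<bar>shap n kap (vv n) j\<bar> < \<bar>shap n kap (vv n) 4\<bar>"
  proof
    fix j assume j: "j \<in> {1..n} - {4}"
    show "\<bar>shap n kap (vv n) j\<bar> < \<bar>shap n kap (vv n) 4\<bar>"
    proof (cases "j \<in> {1,2,3,4}")
      case True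
      then have "j = 1 \<or> j = 2 \<or> j = 3" using j by auto
      then show ?thesis using shap1[OF assms] shap2[OF assms] shap3[OF assms] shap4[OF assms] by auto
    next
      case False
      then show ?thesis using shap_dummy[of j n] j shap1[OF assms] shap2[OF assms] shap3[OF assms] shap4[OF assms] by simp
    qed
  qed
qed


end
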